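(* Let $(X,d)$ be a Polish length space with a doubling measure $\nu$ satisfying the standing assumptions below, let $\varepsilon>0$, and let $\Omega\subset X$ be a $\nu$-measurable set of finite diameter with $0<\nu(\Omega)<\nu(X)$. Then $(m^{\nu,\varepsilon},\nu)$ satisfies a $p$-Poincaré inequality in $\Omega$ for every $p\ge1$.
   Context: $(X,d)$ is a length space if $d(x,y)$ equals the infimum of lengths of curves joining $x$ and $y$. $\nu$ is doubling if there is $C_d\ge1$ with $0<\nu(B(x,2r))\le C_d\,\nu(B(x,r))<\infty$ for all $x\in X$, $r>0$. The $\varepsilon$-step random walk is $m^{\nu,\varepsilon}_x:=\nu\llcorner B(x,\varepsilon)/\nu(B(x,\varepsilon))$; $\nu$ is invariant and reversible for it. Standing assumptions: $\nu(X)<\infty$ and $\nu$ is ergodic for $m=m^{\nu,\varepsilon}$ (every Borel $B$ with $m_x(B)=1$ for all $x\in B$ has $\nu(B)\in\{0,\nu(X)\}$). $\partial_m\Omega:=\{x\in X\setminus\Omega: m_x(\Omega)>0\}$, $\Omega_m:=\Omega\cup\partial_m\Omega$; for $u:\Omega\to\mathbb{R}$ and $\psi$ on $\partial_m\Omega$, $u_\psi$ equals $u$ on $\Omega$ and $\psi$ on $\partial_m\Omega$. For $q\ge1$, $(m,\nu)$ satisfies a $q$-Poincaré inequality in $\Omega$ if there is $\lambda>0$ such that $\lambda\int_\Omega|u(x)|^q\,d\nu(x)\le\int_\Omega\int_{\Omega_m}|u_\psi(y)-u(x)|^q\,dm_x(y)\,d\nu(x)+\int_{\partial_m\Omega}|\psi(y)|^q\,d\nu(y)$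 for all $u\in L^q(\Omega,\nu)$ and all $\psi\in L^q(\partial_m\Omega,\nu)$. *)

theory Defs
  imports "HOL-Analysis.Analysis"
begin

definition curve_length :: "(real \<Rightarrow> 'a::metric_space) \<Rightarrow> ennreal" where
  "curve_length \<gamma> =
     (SUP p \<in> {(n, t). t 0 = 0 \<and> t n = 1 \<and> (\<forall>i<n. t i \<le> t (Suc i))}.
        (\<Sum>i<fst p. ennreal (dist (\<gamma> (snd p i)) (\<gamma> (snd p (Suc i))))))"

definition length_space :: "'a::metric_space itself \<Rightarrow> bool" where
  "length_space _ \<longleftrightarrow> (\<forall>x y::'a. ennreal (dist x y) =
      (INF \<gamma> \<in> {\<gamma>. continuous_on {0..1} \<gamma> \<and> \<gamma> 0 = x \<and> \<gamma> 1 = y}. curve_length \<gamma>))"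

definition doubling :: "'a::metric_space measure \<Rightarrow> bool" where
  "doubling \<nu> \<longleftrightarrow> (\<exists>C\<ge>1. \<forall>x r. r > 0 \<longrightarrow>
      0 < emeasure \<nu> (ball x (2 * r)) \<and>
      emeasure \<nu> (ball x (2 * r)) \<le> ennreal C * emeasure \<nu> (ball x r) \<and>
      emeasure \<nu> (ball x r) < \<infinity>)"

definition rw :: "'a::metric_space measure \<Rightarrow> real \<Rightarrow> 'a \<Rightarrow> 'a measure" where
  "rw \<nu> \<epsilon> x = density \<nu> (\<lambda>y. indicator (ball x \<epsilon>) y / emeasure \<nu> (ball x \<epsilon>))"

definition ergodic_rw :: "'a::metric_space measure \<Rightarrow> real \<Rightarrow> bool" where
  "ergodic_rw \<nu> \<epsilon> \<longleftrightarrow> (\<forall>B \<in> sets (borel :: 'a measure).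
      (\<forall>x\<in>B. emeasure (rw \<nu> \<epsilon> x) B = 1) \<longrightarrow>
      emeasure \<nu> B = 0 \<or> emeasure \<nu> B = emeasure \<nu> (space \<nu>))"

definition m_boundary :: "'a::metric_space measure \<Rightarrow> real \<Rightarrow> 'a set \<Rightarrow> 'a set" where
  "m_boundary \<nu> \<epsilon> \<Omega> = {x \<in> space \<nu> - \<Omega>. emeasure (rw \<nu> \<epsilon> x) \<Omega> > 0}"

definition m_closure :: "'a::metric_space measure \<Rightarrow> real \<Rightarrow> 'a set \<Rightarrow> 'a set" where
  "m_closure \<nu> \<epsilon> \<Omega> = \<Omega> \<union> m_boundary \<nu> \<epsilon> \<Omega>"

definition Lq_on :: "'a measure \<Rightarrow> real \<Rightarrow> 'a set \<Rightarrow> ('a \<Rightarrow> real) \<Rightarrow> bool" where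
  "Lq_on \<nu> q A f \<longleftrightarrow> set_borel_measurable \<nu> A f \<and>
      (\<integral>\<^sup>+ x \<in> A. ennreal (\<bar>f x\<bar> powr q) \<partial>\<nu>) < \<infinity>"

definition poincare_ineq :: "'a::metric_space measure \<Rightarrow> real \<Rightarrow> real \<Rightarrow> 'a set \<Rightarrow> bool" where
  "poincare_ineq \<nu> \<epsilon> q \<Omega> \<longleftrightarrow> (\<exists>lam::real. lam > 0 \<and>
     (\<forall>u \<psi>. Lq_on \<nu> q \<Omega> u \<longrightarrow> Lq_on \<nu> q (m_boundary \<nu> \<epsilon> \<Omega>) \<psi> \<longrightarrow>
        ennreal lam * (\<integral>\<^sup>+ x \<in> \<Omega>. ennreal (\<bar>u x\<bar> powr q) \<partial>\<nu>)
        \<le> (\<integral>\<^sup>+ x \<in> \<Omega>. (\<integral>\<^sup>+ y \<in> m_closure \<nu> \<epsilon> \<Omega>.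
               ennreal (\<bar>(if y \<in> \<Omega> then u y else \<psi> y) - u x\<bar> powr q) \<partial>(rw \<nu> \<epsilon> x)) \<partial>\<nu>)
          + (\<integral>\<^sup>+ y \<in> m_boundary \<nu> \<epsilon> \<Omega>. ennreal (\<bar>\<psi> y\<bar> powr q) \<partial>\<nu>)))"

end

theory Submission
  imports Defs
begin

lemma powr_two_bound:
  fixes a b p :: real assumes "p > 0"
  shows "\<bar>a\<bar> powr p \<le> 2 powr p * (\<bar>b - a\<bar> powr p + \<bar>b\<bar> powr p)"
proof -
  let ?m = "max \<bar>b - a\<bar> \<bar>b\<bar>"
  have "\<bar>a\<bar> \<le> 2 * ?m" by (auto simp: abs_if max_def)
  hence "\<bar>a\<bar> powr p \<le> (2 * ?m) powr p" using assms by (simp add: powr_mono2)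
  also have "\<dots> = 2 powr p * ?m powr p" by (simp add: powr_mult)
  also have "?m powr p \<le> \<bar>b - a\<bar> powr p + \<bar>b\<bar> powr p"
    by (cases "\<bar>b - a\<bar> \<le> \<bar>b\<bar>") (auto simp: max_def)
  hence "2 powr p * ?m powr p \<le> 2 powr p * (\<bar>b - a\<bar> powr p + \<bar>b\<bar> powr p)"
    by (simp add: mult_left_mono)
  finally show ?thesis .
qed

lemma length_space_connected:
  assumes "length_space TYPE('a::metric_space)"
  shows "connected (UNIV::'a set)"
proof -
  have "path_connected (UNIV::'a set)"
    unfolding path_connected_def
  proof (intro ballI)
    fix x y :: 'a
    let ?G = "{\<gamma>::real\<Rightarrow>'a. continuous_on {0..1} \<gamma> \<and> \<gamma> 0 = x \<and> \<gamma> 1 = y}"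
    have e: "ennreal (dist x y) = (INF \<gamma> \<in> ?G. curve_length \<gamma>)"
      using assms unfolding length_space_def by blast
    have "(INF \<gamma> \<in> ?G. curve_length \<gamma>) < top" unfolding e[symmetric] by simp
    hence "\<exists>g\<in>?G. curve_length g < top" by (simp only: INF_less_iff)
    then obtain g where "g \<in> ?G" by blast
    hence "continuous_on {0..1} g" "g 0 = x" "g 1 = y" by auto
    thus "\<exists>g. path g \<and> path_image g \<subseteq> UNIV \<and> pathstart g = x \<and> pathfinish g = y"
      by (auto simp: path_def pathstart_def pathfinish_def)
  qed
  thus ?thesis by (rule path_connected_imp_connected)
qed

locale PS =
  fixes \<nu> :: "'a::polish_space measure" and \<epsilon> :: real and \<Omega> :: "'a set"
  assumes sb: "sets \<nu> = sets borel"
    and dbl: "doubling \<nu>"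
    and finV: "emeasure \<nu> (space \<nu>) < \<infinity>"
    and eps: "\<epsilon> > 0"
    and OmM: "\<Omega> \<in> sets (completion \<nu>)"
    and bnd: "bounded \<Omega>"
    and Omlt: "emeasure (completion \<nu>) \<Omega> < emeasure \<nu> (space \<nu>)"
    and conn: "connected (UNIV::'a set)"
begin

abbreviation "M \<equiv> completion \<nu>"

declare emeasure_completion[simp del] measure_completion[simp del]

lemma sp\<nu>[simp]: "space \<nu> = UNIV"
  using sets_eq_imp_space_eq[OF sb] by simp

lemma spM[simp]: "space M = UNIV" by simp

lemma borel_sets_M: "A \<in> sets borel \<Longrightarrow> A \<in> sets M"
  using sb by auto

lemma ball_M[measurable]: "ball x r \<in> sets M" "cball x r \<in> sets M"
  by (auto intro: borel_sets_M)

lemma borel_meas_M: "f \<in> borel_measurable borel \<Longrightarrow> f \<in> borel_measurable M"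
  by (rule measurable_completion) (simp add: measurable_cong_sets[OF sb refl])

lemma em_borel: "A \<in> sets borel \<Longrightarrow> emeasure M A = emeasure \<nu> A"
  using sb by (simp add: emeasure_completion main_part_sets)

lemma em_ball: "emeasure M (ball x r) = emeasure \<nu> (ball x r)"
  by (rule em_borel) simp

lemma finM: "finite_measure M"
proof (rule finite_measureI)
  have "emeasure M UNIV = emeasure \<nu> UNIV" by (rule em_borel) simp
  thus "emeasure M (space M) \<noteq> \<infinity>" using finV by simp
qed

sublocale fm: finite_measure M by (rule finM)

definition "V = measure M UNIV"

lemma V_eq: "emeasure M UNIV = ennreal V"
  unfolding V_def using fm.emeasure_eq_measure by (metis spM)

lemma Vpos: "V > 0"
proof -
  have "0 \<le> emeasure M \<Omega>" by simp
  hence "0 < emeasure \<nu> (space \<nu>)" using Omlt by (meson le_less_trans)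
  hence "0 < emeasure M UNIV" using em_borel[of UNIV] by simp
  thus ?thesis using V_eq by simp
qed

lemma emM: "emeasure M A = ennreal (measure M A)"
  using fm.emeasure_eq_measure .

lemma dblM: "\<exists>C\<ge>1. \<forall>x r. r > 0 \<longrightarrow> 0 < emeasure M (ball x (2 * r)) \<and>
      emeasure M (ball x (2 * r)) \<le> ennreal C * emeasure M (ball x r)"
  using dbl unfolding doubling_def em_ball by blast

lemma ball_pos: "r > 0 \<Longrightarrow> 0 < measure M (ball x r)"
proof -
  assume r: "r > 0"
  obtain C where C: "\<forall>x r. r > 0 \<longrightarrow> 0 < emeasure M (ball x (2 * r))"
    using dblM by blast
  have "r/2 > 0" using r by simp
  hence "0 < emeasure M (ball x (2 * (r/2)))" using C by blast
  hence "0 < emeasure M (ball x r)" by simp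
  thus ?thesis using emM by simp
qed

lemma dbl_iter:
  assumes C: "\<forall>x r. r > 0 \<longrightarrow> emeasure M (ball x (2 * r)) \<le> ennreal C * emeasure M (ball x r)"
    and C1: "C \<ge> 1" and r: "r > 0"
  shows "emeasure M (ball x (2^n * r)) \<le> ennreal (C^n) * emeasure M (ball x r)"
proof (induction n)
  case 0 thus ?case by simp
next
  case (Suc n)
  have "emeasure M (ball x (2^Suc n * r)) = emeasure M (ball x (2 * (2^n * r)))" by (simp add: mult.assoc)
  also have "\<dots> \<le> ennreal C * emeasure M (ball x (2^n * r))" using C r by simp
  also have "\<dots> \<le> ennreal C * (ennreal (C^n) * emeasure M (ball x r))"
    using Suc by (intro mult_left_mono) auto
  also have "\<dots> = ennreal (C^Suc n) * emeasure M (ball x r)"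
    using C1 by (simp add: ennreal_mult mult.assoc)
  finally show ?case .
qed

lemma lower_bound:
  assumes r: "r > 0" and R: "R > 0"
  shows "\<exists>c>0. \<forall>p\<in>ball x0 R. c \<le> measure M (ball p r)"
proof -
  obtain C where C1: "C \<ge> 1" and C: "\<forall>x r. r > 0 \<longrightarrow> emeasure M (ball x (2 * r)) \<le> ennreal C * emeasure M (ball x r)"
    using dblM by blast
  obtain n where n: "2 * R / r < 2 ^ n" using real_arch_pow[of 2 "2 * R / r"] by auto
  hence n': "2 * R \<le> 2^n * r" using r by (simp add: field_simps)
  define c where "c = measure M (ball x0 R) / C^n"
  have "c > 0" unfolding c_def using ball_pos[OF R] C1 by simp
  moreover have "c \<le> measure M (ball p r)" if p: "p \<in> ball x0 R" for p
  proof -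
    have "ball x0 R \<subseteq> ball p (2^n * r)"
    proof
      fix y assume "y \<in> ball x0 R"
      hence "dist p y < 2 * R" using p by (metis dist_commute dist_triangle_lt mem_ball add_strict_mono mult_2)
      thus "y \<in> ball p (2^n * r)" using n' by simp
    qed
    hence "emeasure M (ball x0 R) \<le> emeasure M (ball p (2^n * r))" by (rule emeasure_mono) simp
    also have "\<dots> \<le> ennreal (C^n) * emeasure M (ball p r)" by (rule dbl_iter[OF C C1 r])
    finally have "ennreal (measure M (ball x0 R)) \<le> ennreal (C^n * measure M (ball p r))"
      using C1 by (simp add: emM ennreal_mult)
    hence "measure M (ball x0 R) \<le> C^n * measure M (ball p r)"
      using C1 by (subst (asm) ennreal_le_iff) auto
    thus ?thesis unfolding c_def using C1 by (simp add: divide_le_eq mult.commute)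
  qed
  ultimately show ?thesis by blast
qed

end

context PS begin

lemma net:
  fixes x0 :: 'a
  assumes r: "r > 0" and R: "R > 0"
  shows "\<exists>Zs. finite Zs \<and> Zs \<subseteq> ball x0 R \<and> (\<forall>y\<in>ball x0 R. \<exists>z\<in>Zs. dist z y < 2*r)"
proof -
  obtain c where c: "c > 0" and cb: "\<forall>p\<in>ball x0 R. c \<le> measure M (ball p r)"
    using lower_bound[OF r R] by blast
  define Fam where "Fam = {P. finite P \<and> P \<subseteq> ball x0 R \<and> (\<forall>a\<in>P. \<forall>b\<in>P. a \<noteq> b \<longrightarrow> 2*r \<le> dist a b)}"
  have cardb: "card P \<le> nat \<lceil>V / c\<rceil>" if P: "P \<in> Fam" for P
  proof -
    have fin: "finite P" and sub: "P \<subseteq> ball x0 R" and sep: "\<forall>a\<in>P. \<forall>b\<in>P. a \<noteq> b \<longrightarrow> 2*r \<le> dist a b"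
      using P unfolding Fam_def by auto
    have disj: "disjoint_family_on (\<lambda>a. ball a r) P"
    unfolding disjoint_family_on_def proof (intro ballI impI)
      fix a b assume ab: "a \<in> P" "b \<in> P" "a \<noteq> b"
      show "ball a r \<inter> ball b r = {}"
      proof (rule ccontr)
        assume "ball a r \<inter> ball b r \<noteq> {}"
        then obtain y where "dist a y < r" "dist b y < r" by auto
        hence "dist a b < 2*r" by (metis dist_commute dist_triangle_lt add_strict_mono mult_2)
        thus False using sep ab by force
      qed
    qed
    have "(\<Sum>a\<in>P. c) \<le> (\<Sum>a\<in>P. measure M (ball a r))"
      using cb sub by (intro sum_mono) auto
    also have "\<dots> = measure M (\<Union>a\<in>P. ball a r)"
      by (rule fm.finite_measure_finite_Union[symmetric]) (use fin disj in auto)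
    also have "\<dots> \<le> V" unfolding V_def using fm.bounded_measure by simp
    finally have "real (card P) * c \<le> V" by simp
    hence "real (card P) \<le> V / c" using c by (simp add: le_divide_eq)
    thus ?thesis by linarith
  qed
  have "{} \<in> Fam" unfolding Fam_def by simp
  then obtain P where P: "P \<in> Fam" and Pmax: "\<forall>Q. Q \<in> Fam \<longrightarrow> card Q \<le> card P"
    using ex_has_greatest_nat[of "\<lambda>Q. Q \<in> Fam" "{}" card "Suc (nat \<lceil>V / c\<rceil>)"] cardb
    by (meson le_imp_less_Suc)
  have fin: "finite P" and sub: "P \<subseteq> ball x0 R" and sep: "\<forall>a\<in>P. \<forall>b\<in>P. a \<noteq> b \<longrightarrow> 2*r \<le> dist a b"
    using P unfolding Fam_def by auto
  have "\<exists>z\<in>P. dist z y < 2*r" if y: "y \<in> ball x0 R" for y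
  proof (rule ccontr)
    assume no: "\<not> (\<exists>z\<in>P. dist z y < 2*r)"
    hence yP: "y \<notin> P" using r by force
    have "insert y P \<in> Fam" unfolding Fam_def using fin sub sep y no
      by (auto simp: dist_commute not_less)
    hence "card (insert y P) \<le> card P" using Pmax by blast
    thus False using yP fin by simp
  qed
  thus ?thesis using fin sub by blast
qed

end

context PS begin

lemma ballM_pos: "0 < \<epsilon>' \<Longrightarrow> 0 < emeasure M (ball x \<epsilon>')" using ball_pos emM by simp
lemma ballM_fin: "emeasure M (ball x r) < top" using emM by simp

lemma dens_meas[measurable]: "(\<lambda>y. indicator (ball x r) y / emeasure M (ball x r)) \<in> borel_measurable M"
  by measurable

lemma rw_emeasure:
  assumes A: "A \<in> sets M"
  shows "emeasure (rw M \<epsilon> x) A = emeasure M (A \<inter> ball x \<epsilon>) / emeasure M (ball x \<epsilon>)"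
proof -
  have "emeasure (rw M \<epsilon> x) A = (\<integral>\<^sup>+ y. indicator (ball x \<epsilon>) y / emeasure M (ball x \<epsilon>) * indicator A y \<partial>M)"
    unfolding rw_def by (rule emeasure_density) (use A in auto)
  also have "\<dots> = (\<integral>\<^sup>+ y. indicator (A \<inter> ball x \<epsilon>) y * inverse (emeasure M (ball x \<epsilon>)) \<partial>M)"
    by (rule nn_integral_cong) (auto simp: divide_ennreal_def indicator_def)
  also have "\<dots> = emeasure M (A \<inter> ball x \<epsilon>) * inverse (emeasure M (ball x \<epsilon>))"
    using A by (subst nn_integral_multc) auto
  finally show ?thesis by (simp add: divide_ennreal_def)
qed

definition "G = {x. 0 < emeasure M (\<Omega> \<inter> ball x \<epsilon>)}"

lemma G_open: "open G"
  unfolding open_contains_ball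
proof (intro ballI)
  fix x assume "x \<in> G"
  hence pos: "0 < emeasure M (\<Omega> \<inter> ball x \<epsilon>)" unfolding G_def by simp
  define A where "A n = \<Omega> \<inter> ball x (\<epsilon> - \<epsilon> / real (Suc (Suc n)))" for n
  have incA: "incseq A" unfolding A_def incseq_def
  proof (intro allI impI subsetI)
    fix m n y assume mn: "m \<le> n" and y: "y \<in> \<Omega> \<inter> ball x (\<epsilon> - \<epsilon> / real (Suc (Suc m)))"
    have "\<epsilon> / real (Suc (Suc n)) \<le> \<epsilon> / real (Suc (Suc m))"
      using mn eps by (intro divide_left_mono) auto
    thus "y \<in> \<Omega> \<inter> ball x (\<epsilon> - \<epsilon> / real (Suc (Suc n)))" using y by auto
  qed
  have UA: "(\<Union>n. A n) = \<Omega> \<inter> ball x \<epsilon>"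
  proof
    have "\<epsilon> / real (Suc (Suc n)) > 0" for n using eps by simp
    hence "ball x (\<epsilon> - \<epsilon> / real (Suc (Suc n))) \<subseteq> ball x \<epsilon>" for n
      by (intro subset_ball) (smt (verit))
    thus "(\<Union>n. A n) \<subseteq> \<Omega> \<inter> ball x \<epsilon>" unfolding A_def by blast
    show "\<Omega> \<inter> ball x \<epsilon> \<subseteq> (\<Union>n. A n)"
    proof
      fix y assume y: "y \<in> \<Omega> \<inter> ball x \<epsilon>"
      hence d: "0 < \<epsilon> - dist x y" by simp
      obtain n where n: "\<epsilon> / (\<epsilon> - dist x y) < real n" using reals_Archimedean2 by blast
      have "\<epsilon> / real (Suc (Suc n)) < \<epsilon> - dist x y"
        using n d eps by (simp add: divide_less_eq mult.commute) (simp add: algebra_simps)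
      hence "y \<in> A n" unfolding A_def using y by auto
      thus "y \<in> (\<Union>n. A n)" by blast
    qed
  qed
  have "range A \<subseteq> sets M" unfolding A_def using OmM by auto
  hence "(SUP n. emeasure M (A n)) = emeasure M (\<Omega> \<inter> ball x \<epsilon>)"
    using SUP_emeasure_incseq[of A M] incA UA by simp
  with pos obtain n where n: "0 < emeasure M (A n)" by (metis less_SUP_iff)
  define e where "e = \<epsilon> / real (Suc (Suc n))"
  have e: "e > 0" unfolding e_def using eps by simp
  have "ball x e \<subseteq> G"
  proof
    fix y assume y: "y \<in> ball x e"
    have "A n \<subseteq> \<Omega> \<inter> ball y \<epsilon>"
    proof
      fix z assume "z \<in> A n"
      hence "z \<in> \<Omega>" "dist x z < \<epsilon> - e" unfolding A_def e_def by auto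
      moreover have "dist y z \<le> dist x y + dist x z" by (metis dist_commute dist_triangle)
      ultimately show "z \<in> \<Omega> \<inter> ball y \<epsilon>" using y by auto
    qed
    hence "emeasure M (A n) \<le> emeasure M (\<Omega> \<inter> ball y \<epsilon>)" using OmM by (intro emeasure_mono) auto
    thus "y \<in> G" unfolding G_def using n by simp
  qed
  thus "\<exists>e>0. ball x e \<subseteq> G" using e by blast
qed

abbreviation "S \<equiv> m_boundary M \<epsilon> \<Omega>"

lemma S_eq: "S = G - \<Omega>"
proof -
  have "0 < emeasure (rw M \<epsilon> x) \<Omega> \<longleftrightarrow> 0 < emeasure M (\<Omega> \<inter> ball x \<epsilon>)" for x
    using OmM eps by (simp add: rw_emeasure ennreal_zero_less_divide ballM_fin)
  thus ?thesis unfolding m_boundary_def G_def by auto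
qed

lemma S_M[measurable]: "S \<in> sets M"
proof -
  have "G \<in> sets M" using G_open by (auto intro!: borel_sets_M)
  thus ?thesis unfolding S_eq using OmM by auto
qed

lemma mcl: "m_closure M \<epsilon> \<Omega> = \<Omega> \<union> S" unfolding m_closure_def ..

lemma S_disj: "S \<inter> \<Omega> = {}" unfolding S_eq by auto

end

context PS begin

lemma Om_M[measurable]: "\<Omega> \<in> sets M" by (rule OmM)

lemma Vd: "1 \<le> ennreal V * (1 / emeasure M (ball x \<epsilon>))"
proof -
  define b where "b = measure M (ball x \<epsilon>)"
  have b: "0 < b" unfolding b_def using ball_pos eps by simp
  have bV: "b \<le> V" unfolding b_def V_def using fm.bounded_measure by simp
  have "ennreal V * (1 / emeasure M (ball x \<epsilon>)) = ennreal V / ennreal b"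
    unfolding b_def emM[of "ball x \<epsilon>"] by (simp add: ennreal_times_divide)
  also have "\<dots> = ennreal (V / b)" using b Vpos by (simp add: divide_ennreal)
  moreover have "1 \<le> V / b" using b bV by simp
  hence "ennreal 1 \<le> ennreal (V / b)" by (rule ennreal_leI)
  ultimately show ?thesis by simp
qed

lemma PW:
  assumes U[measurable]: "U \<in> borel_measurable M" and P[measurable]: "P \<in> borel_measurable M"
    and U\<Omega>: "\<forall>y\<in>\<Omega>. U y = u y" and P0: "\<forall>y. y \<notin> S \<longrightarrow> P y = 0"
    and PS: "\<forall>y\<in>S. P y = \<psi> y" and U0: "\<forall>y. y \<notin> \<Omega> \<longrightarrow> U y = 0"
    and x: "x \<in> \<Omega>" and B[measurable]: "B \<in> sets M" and Bs: "B \<subseteq> ball x \<epsilon> \<inter> (\<Omega> \<union> S)"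
  shows "(\<integral>\<^sup>+ y. indicator B y * ennreal (\<bar>U y + P y - U x\<bar> powr p) \<partial>M)
     \<le> ennreal V * (\<integral>\<^sup>+ y. ennreal (\<bar>(if y \<in> \<Omega> then u y else \<psi> y) - u x\<bar> powr p)
              * indicator (m_closure M \<epsilon> \<Omega>) y \<partial>rw M \<epsilon> x)"
proof -
  let ?d = "\<lambda>y. indicator (ball x \<epsilon>) y / emeasure M (ball x \<epsilon>)"
  let ?g = "\<lambda>y. ennreal (\<bar>U y + P y - U x\<bar> powr p) * indicator (\<Omega> \<union> S) y"
  have "(\<integral>\<^sup>+ y. ennreal (\<bar>(if y \<in> \<Omega> then u y else \<psi> y) - u x\<bar> powr p)
              * indicator (m_closure M \<epsilon> \<Omega>) y \<partial>rw M \<epsilon> x) = (\<integral>\<^sup>+ y. ?g y \<partial>rw M \<epsilon> x)"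
  proof (rule nn_integral_cong)
    fix y
    show "ennreal (\<bar>(if y \<in> \<Omega> then u y else \<psi> y) - u x\<bar> powr p) * indicator (m_closure M \<epsilon> \<Omega>) y = ?g y"
      using S_disj U\<Omega> P0 PS U0 x unfolding mcl by (cases "y \<in> \<Omega>"; cases "y \<in> S") auto
  qed
  also have "\<dots> = (\<integral>\<^sup>+ y. ?d y * ?g y \<partial>M)"
    unfolding rw_def by (rule nn_integral_density) measurable
  finally have eq: "(\<integral>\<^sup>+ y. ennreal (\<bar>(if y \<in> \<Omega> then u y else \<psi> y) - u x\<bar> powr p)
              * indicator (m_closure M \<epsilon> \<Omega>) y \<partial>rw M \<epsilon> x) = (\<integral>\<^sup>+ y. ?d y * ?g y \<partial>M)" .
  have "(\<integral>\<^sup>+ y. indicator B y * ennreal (\<bar>U y + P y - U x\<bar> powr p) \<partial>M) \<le> (\<integral>\<^sup>+ y. ennreal V * (?d y * ?g y) \<partial>M)"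
  proof (rule nn_integral_mono)
    fix y
    show "indicator B y * ennreal (\<bar>U y + P y - U x\<bar> powr p) \<le> ennreal V * (?d y * ?g y)"
    proof (cases "y \<in> B")
      case True
      hence "y \<in> ball x \<epsilon>" "y \<in> \<Omega> \<union> S" using Bs by auto
      hence "ennreal V * (?d y * ?g y) = (ennreal V * (1 / emeasure M (ball x \<epsilon>))) * ennreal (\<bar>U y + P y - U x\<bar> powr p)"
        by (simp add: mult.assoc)
      also have "\<dots> \<ge> 1 * ennreal (\<bar>U y + P y - U x\<bar> powr p)"
        by (rule mult_right_mono[OF Vd]) simp
      finally show ?thesis using True by simp
    qed simp
  qed
  also have "\<dots> = ennreal V * (\<integral>\<^sup>+ y. ?d y * ?g y \<partial>M)"
    by (rule nn_integral_cmult) measurable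
  finally show ?thesis unfolding eq .
qed

lemma KEY:
  assumes U[measurable]: "U \<in> borel_measurable M" and P[measurable]: "P \<in> borel_measurable M"
    and U\<Omega>: "\<forall>y\<in>\<Omega>. U y = u y" and P0: "\<forall>y. y \<notin> S \<longrightarrow> P y = 0"
    and PS: "\<forall>y\<in>S. P y = \<psi> y" and U0: "\<forall>y. y \<notin> \<Omega> \<longrightarrow> U y = 0"
    and A[measurable]: "A \<in> sets M" and As: "A \<subseteq> \<Omega>"
    and B[measurable]: "B \<in> sets M" and Bs: "B \<subseteq> \<Omega> \<union> S"
    and d: "\<forall>x\<in>A. \<forall>y\<in>B. dist x y < \<epsilon>"
  shows "(\<integral>\<^sup>+ x. indicator A x * (\<integral>\<^sup>+ y. indicator B y * ennreal (\<bar>U y + P y - U x\<bar> powr p) \<partial>M) \<partial>M)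
     \<le> ennreal V * (\<integral>\<^sup>+ x. (\<integral>\<^sup>+ y. ennreal (\<bar>(if y \<in> \<Omega> then u y else \<psi> y) - u x\<bar> powr p)
              * indicator (m_closure M \<epsilon> \<Omega>) y \<partial>rw M \<epsilon> x) * indicator \<Omega> x \<partial>M)"
proof -
  let ?I = "\<lambda>x. \<integral>\<^sup>+ y. indicator B y * ennreal (\<bar>U y + P y - U x\<bar> powr p) \<partial>M"
  let ?R = "\<lambda>x. \<integral>\<^sup>+ y. ennreal (\<bar>(if y \<in> \<Omega> then u y else \<psi> y) - u x\<bar> powr p)
              * indicator (m_closure M \<epsilon> \<Omega>) y \<partial>rw M \<epsilon> x"
  have VV: "ennreal V * ennreal (1/V) = 1" using Vpos by (simp add: ennreal_mult[symmetric])
  have "(\<integral>\<^sup>+ x. indicator A x * ?I x \<partial>M) = (\<integral>\<^sup>+ x. ennreal V * (ennreal (1/V) * (indicator A x * ?I x)) \<partial>M)"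
    by (simp add: mult.assoc[symmetric] VV)
  also have "\<dots> = ennreal V * (\<integral>\<^sup>+ x. ennreal (1/V) * (indicator A x * ?I x) \<partial>M)"
    by (rule nn_integral_cmult) measurable
  also have "\<dots> \<le> ennreal V * (\<integral>\<^sup>+ x. ?R x * indicator \<Omega> x \<partial>M)"
  proof (intro mult_left_mono nn_integral_mono)
    fix x
    show "ennreal (1/V) * (indicator A x * ?I x) \<le> ?R x * indicator \<Omega> x"
    proof (cases "x \<in> A")
      case True
      hence x: "x \<in> \<Omega>" using As by auto
      have "B \<subseteq> ball x \<epsilon> \<inter> (\<Omega> \<union> S)" using d True Bs by auto
      hence "?I x \<le> ennreal V * ?R x" using PW[OF U P U\<Omega> P0 PS U0 x B] by blast
      hence "ennreal (1/V) * ?I x \<le> ennreal (1/V) * (ennreal V * ?R x)" by (rule mult_left_mono) simp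
      also have "\<dots> = ?R x" using VV by (simp add: mult.assoc[symmetric] mult.commute)
      finally show ?thesis using True x by simp
    qed simp
  qed simp
  finally show ?thesis .
qed

lemma PAIR:
  assumes U[measurable]: "U \<in> borel_measurable M" and P[measurable]: "P \<in> borel_measurable M"
    and U\<Omega>: "\<forall>y\<in>\<Omega>. U y = u y" and P0: "\<forall>y. y \<notin> S \<longrightarrow> P y = 0"
    and PS: "\<forall>y\<in>S. P y = \<psi> y" and U0: "\<forall>y. y \<notin> \<Omega> \<longrightarrow> U y = 0"
    and A[measurable]: "A \<in> sets M" and As: "A \<subseteq> \<Omega>"
    and B[measurable]: "B \<in> sets M" and Bs: "B \<subseteq> \<Omega> \<union> S"
    and d: "\<forall>x\<in>A. \<forall>y\<in>B. dist x y < \<epsilon>" and p: "p > 0"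
  shows "emeasure M B * (\<integral>\<^sup>+ x. indicator A x * ennreal (\<bar>U x\<bar> powr p) \<partial>M)
     \<le> ennreal (2 powr p) * (ennreal V * (\<integral>\<^sup>+ x. (\<integral>\<^sup>+ y. ennreal (\<bar>(if y \<in> \<Omega> then u y else \<psi> y) - u x\<bar> powr p)
              * indicator (m_closure M \<epsilon> \<Omega>) y \<partial>rw M \<epsilon> x) * indicator \<Omega> x \<partial>M)
        + ennreal V * (\<integral>\<^sup>+ y. indicator B y * ennreal (\<bar>U y + P y\<bar> powr p) \<partial>M))"
proof -
  let ?E = "(\<integral>\<^sup>+ x. (\<integral>\<^sup>+ y. ennreal (\<bar>(if y \<in> \<Omega> then u y else \<psi> y) - u x\<bar> powr p)
              * indicator (m_closure M \<epsilon> \<Omega>) y \<partial>rw M \<epsilon> x) * indicator \<Omega> x \<partial>M)"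
  let ?G1 = "\<lambda>x y. ennreal (\<bar>U y + P y - U x\<bar> powr p)"
  let ?G2 = "\<lambda>y. ennreal (\<bar>U y + P y\<bar> powr p)"
  let ?I1 = "\<lambda>x. \<integral>\<^sup>+ y. indicator B y * ?G1 x y \<partial>M"
  let ?K = "\<integral>\<^sup>+ y. indicator B y * ?G2 y \<partial>M"
  have inner: "(\<integral>\<^sup>+ y. ennreal (2 powr p) * (indicator A x * (indicator B y * ?G1 x y) + indicator A x * (indicator B y * ?G2 y)) \<partial>M)
      = ennreal (2 powr p) * (indicator A x * ?I1 x + indicator A x * ?K)" for x
    by (simp add: nn_integral_cmult nn_integral_add)
  have "emeasure M B * (\<integral>\<^sup>+ x. indicator A x * ennreal (\<bar>U x\<bar> powr p) \<partial>M)
      = (\<integral>\<^sup>+ x. indicator A x * ennreal (\<bar>U x\<bar> powr p) * emeasure M B \<partial>M)"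
    by (subst nn_integral_multc) (measurable, simp add: mult.commute)
  also have "\<dots> = (\<integral>\<^sup>+ x. (\<integral>\<^sup>+ y. indicator A x * ennreal (\<bar>U x\<bar> powr p) * indicator B y \<partial>M) \<partial>M)"
    by (rule nn_integral_cong) (simp add: nn_integral_cmult_indicator)
  also have "\<dots> \<le> (\<integral>\<^sup>+ x. (\<integral>\<^sup>+ y. ennreal (2 powr p) * (indicator A x * (indicator B y * ?G1 x y) + indicator A x * (indicator B y * ?G2 y)) \<partial>M) \<partial>M)"
  proof (intro nn_integral_mono)
    fix x y
    have "\<bar>U x\<bar> powr p \<le> 2 powr p * (\<bar>(U y + P y) - U x\<bar> powr p + \<bar>U y + P y\<bar> powr p)"
      by (rule powr_two_bound[OF p])
    hence "ennreal (\<bar>U x\<bar> powr p) \<le> ennreal (2 powr p) * (?G1 x y + ?G2 y)"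
      by (simp add: ennreal_mult[symmetric] ennreal_plus[symmetric] del: ennreal_plus)
    thus "indicator A x * ennreal (\<bar>U x\<bar> powr p) * indicator B y \<le> ennreal (2 powr p) * (indicator A x * (indicator B y * ?G1 x y) + indicator A x * (indicator B y * ?G2 y))"
      by (cases "x \<in> A"; cases "y \<in> B") auto
  qed
  also have "\<dots> = (\<integral>\<^sup>+ x. ennreal (2 powr p) * (indicator A x * ?I1 x + indicator A x * ?K) \<partial>M)"
    unfolding inner ..
  also have "\<dots> = ennreal (2 powr p) * ((\<integral>\<^sup>+ x. indicator A x * ?I1 x \<partial>M) + ?K * emeasure M A)"
  proof -
    have k: "(\<integral>\<^sup>+ x. indicator A x * ?K \<partial>M) = emeasure M A * ?K" by (simp add: nn_integral_multc)
    show ?thesis by (simp add: nn_integral_cmult nn_integral_add k mult.commute)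
  qed
  also have "\<dots> \<le> ennreal (2 powr p) * (ennreal V * ?E + ennreal V * ?K)"
  proof (intro mult_left_mono add_mono)
    show "(\<integral>\<^sup>+ x. indicator A x * ?I1 x \<partial>M) \<le> ennreal V * ?E"
      by (rule KEY[OF U P U\<Omega> P0 PS U0 A As B Bs d])
    have "emeasure M A \<le> ennreal V" using V_eq by (metis emeasure_space spM)
    thus "?K * emeasure M A \<le> ennreal V * ?K" by (simp add: mult.commute mult_right_mono)
  qed simp_all
  finally show ?thesis .
qed

end

lemma ennreal_div_bound:
  fixes I F :: ennreal
  assumes "ennreal b * I \<le> ennreal K * F" "b > 0" "K \<ge> 0"
  shows "I \<le> ennreal (K / b) * F"
proof -
  have "I = ennreal (1/b) * (ennreal b * I)"
    using assms(2) by (simp add: mult.assoc[symmetric] ennreal_mult[symmetric])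
  also have "\<dots> \<le> ennreal (1/b) * (ennreal K * F)" by (rule mult_left_mono[OF assms(1)]) simp
  also have "\<dots> = ennreal (K / b) * F"
    using assms(2,3) by (simp add: mult.assoc[symmetric] ennreal_mult[symmetric])
  finally show ?thesis .
qed

locale PSp = PS +
  fixes p :: real
  assumes p1: "p \<ge> 1"
begin

definition "En u \<psi> = (\<integral>\<^sup>+ x. (\<integral>\<^sup>+ y. ennreal (\<bar>(if y \<in> \<Omega> then u y else \<psi> y) - u x\<bar> powr p)
              * indicator (m_closure M \<epsilon> \<Omega>) y \<partial>rw M \<epsilon> x) * indicator \<Omega> x \<partial>M)"
definition "Sp \<psi> = (\<integral>\<^sup>+ y. ennreal (\<bar>\<psi> y\<bar> powr p) * indicator S y \<partial>M)"
definition "Fn u \<psi> = En u \<psi> + Sp \<psi>"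
definition "Adm u \<psi> \<longleftrightarrow> Lq_on M p \<Omega> u \<and> Lq_on M p S \<psi>"
definition "\<delta> = \<epsilon> / 8"
definition "Bound z C \<longleftrightarrow> C \<ge> 0 \<and> (\<forall>u \<psi>. Adm u \<psi> \<longrightarrow>
   (\<integral>\<^sup>+ x. ennreal (\<bar>u x\<bar> powr p) * indicator (ball z \<delta> \<inter> \<Omega>) x \<partial>M) \<le> ennreal C * Fn u \<psi>)"

lemma delta_pos: "\<delta> > 0" unfolding \<delta>_def using eps by simp

lemma pair_adm:
  assumes adm: "Adm u \<psi>"
    and A: "A \<in> sets M" "A \<subseteq> \<Omega>" and B: "B \<in> sets M" "B \<subseteq> \<Omega> \<union> S"
    and d: "\<forall>x\<in>A. \<forall>y\<in>B. dist x y < \<epsilon>"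
  shows "emeasure M B * (\<integral>\<^sup>+ x. ennreal (\<bar>u x\<bar> powr p) * indicator A x \<partial>M)
     \<le> ennreal (2 powr p) * (ennreal V * En u \<psi>
        + ennreal V * (\<integral>\<^sup>+ y. ennreal (\<bar>if y \<in> \<Omega> then u y else \<psi> y\<bar> powr p) * indicator B y \<partial>M))"
proof -
  let ?U = "\<lambda>x. indicator \<Omega> x *\<^sub>R u x" and ?P = "\<lambda>x. indicator S x *\<^sub>R \<psi> x"
  have U: "?U \<in> borel_measurable M" and P: "?P \<in> borel_measurable M"
    using adm unfolding Adm_def Lq_on_def set_borel_measurable_def by auto
  have e1: "(\<integral>\<^sup>+ x. ennreal (\<bar>u x\<bar> powr p) * indicator A x \<partial>M) = (\<integral>\<^sup>+ x. indicator A x * ennreal (\<bar>?U x\<bar> powr p) \<partial>M)"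
    by (rule nn_integral_cong) (use A in \<open>auto simp: indicator_def\<close>)
  have e2: "(\<integral>\<^sup>+ y. ennreal (\<bar>if y \<in> \<Omega> then u y else \<psi> y\<bar> powr p) * indicator B y \<partial>M) =
      (\<integral>\<^sup>+ y. indicator B y * ennreal (\<bar>?U y + ?P y\<bar> powr p) \<partial>M)"
    by (rule nn_integral_cong) (use B S_disj in \<open>auto simp: indicator_def\<close>)
  have p: "p > 0" using p1 by simp
  show ?thesis unfolding e1 e2 En_def
    by (rule PAIR[OF U P _ _ _ _ A B d p]) (use S_disj in \<open>auto simp: indicator_def\<close>)
qed

lemma base_bound:
  assumes pos: "0 < emeasure M (S \<inter> ball z (\<epsilon> - \<delta>))"
  shows "\<exists>C. Bound z C"
proof -
  define b where "b = measure M (S \<inter> ball z (\<epsilon> - \<delta>))"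
  have bpos: "b > 0" using pos emM unfolding b_def by simp
  have bb: "emeasure M (S \<inter> ball z (\<epsilon> - \<delta>)) = ennreal b" unfolding b_def by (rule emM)
  define C where "C = 2 powr p * V / b"
  have "Bound z C" unfolding Bound_def
  proof (intro conjI allI impI)
    show "C \<ge> 0" unfolding C_def using bpos Vpos by simp
    fix u \<psi> assume adm: "Adm u \<psi>"
    have d: "\<forall>x\<in>ball z \<delta> \<inter> \<Omega>. \<forall>y\<in>S \<inter> ball z (\<epsilon> - \<delta>). dist x y < \<epsilon>"
      by (auto simp: dist_commute) (smt (verit) dist_commute dist_triangle)
    have "ennreal b * (\<integral>\<^sup>+ x. ennreal (\<bar>u x\<bar> powr p) * indicator (ball z \<delta> \<inter> \<Omega>) x \<partial>M)
      \<le> ennreal (2 powr p) * (ennreal V * En u \<psi>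
        + ennreal V * (\<integral>\<^sup>+ y. ennreal (\<bar>if y \<in> \<Omega> then u y else \<psi> y\<bar> powr p) * indicator (S \<inter> ball z (\<epsilon> - \<delta>)) y \<partial>M))"
      unfolding bb[symmetric] by (rule pair_adm[OF adm _ _ _ _ d]) auto
    also have "\<dots> \<le> ennreal (2 powr p) * (ennreal V * En u \<psi> + ennreal V * Sp \<psi>)"
      unfolding Sp_def
      by (intro mult_left_mono add_mono nn_integral_mono) (auto simp: indicator_def S_eq)
    also have "\<dots> = ennreal (2 powr p * V) * Fn u \<psi>"
      unfolding Fn_def using Vpos by (simp add: ennreal_mult distrib_left mult.assoc)
    finally show "(\<integral>\<^sup>+ x. ennreal (\<bar>u x\<bar> powr p) * indicator (ball z \<delta> \<inter> \<Omega>) x \<partial>M) \<le> ennreal C * Fn u \<psi>"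
      unfolding C_def using bpos Vpos by (intro ennreal_div_bound) auto
  qed
  thus ?thesis by blast
qed

lemma step_bound:
  assumes bz': "Bound z' C'" and dz: "dist z z' < \<epsilon> - 2 * \<delta>"
    and pos: "0 < emeasure M (ball z' \<delta> \<inter> \<Omega>)"
  shows "\<exists>C. Bound z C"
proof -
  define b where "b = measure M (ball z' \<delta> \<inter> \<Omega>)"
  have bpos: "b > 0" using pos emM unfolding b_def by simp
  have bb: "emeasure M (ball z' \<delta> \<inter> \<Omega>) = ennreal b" unfolding b_def by (rule emM)
  have C'0: "C' \<ge> 0" using bz' unfolding Bound_def by simp
  define C where "C = 2 powr p * V * (1 + C') / b"
  have "Bound z C" unfolding Bound_def
  proof (intro conjI allI impI)
    show "C \<ge> 0" unfolding C_def using bpos Vpos C'0 by simp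
    fix u \<psi> assume adm: "Adm u \<psi>"
    have d: "\<forall>x\<in>ball z \<delta> \<inter> \<Omega>. \<forall>y\<in>ball z' \<delta> \<inter> \<Omega>. dist x y < \<epsilon>"
    proof (intro ballI)
      fix x y assume "x \<in> ball z \<delta> \<inter> \<Omega>" "y \<in> ball z' \<delta> \<inter> \<Omega>"
      hence "dist z x < \<delta>" "dist z' y < \<delta>" by auto
      moreover have "dist x y \<le> dist z x + dist z z' + dist z' y"
        by (smt (verit) dist_commute dist_triangle)
      ultimately show "dist x y < \<epsilon>" using dz by linarith
    qed
    have "ennreal b * (\<integral>\<^sup>+ x. ennreal (\<bar>u x\<bar> powr p) * indicator (ball z \<delta> \<inter> \<Omega>) x \<partial>M)
      \<le> ennreal (2 powr p) * (ennreal V * En u \<psi>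
        + ennreal V * (\<integral>\<^sup>+ y. ennreal (\<bar>if y \<in> \<Omega> then u y else \<psi> y\<bar> powr p) * indicator (ball z' \<delta> \<inter> \<Omega>) y \<partial>M))"
      unfolding bb[symmetric] by (rule pair_adm[OF adm _ _ _ _ d]) auto
    note P1 = this
    have KB: "(\<integral>\<^sup>+ y. ennreal (\<bar>if y \<in> \<Omega> then u y else \<psi> y\<bar> powr p) * indicator (ball z' \<delta> \<inter> \<Omega>) y \<partial>M)
       = (\<integral>\<^sup>+ y. ennreal (\<bar>u y\<bar> powr p) * indicator (ball z' \<delta> \<inter> \<Omega>) y \<partial>M)"
      by (rule nn_integral_cong) (auto simp: indicator_def)
    have KB2: "(\<integral>\<^sup>+ y. ennreal (\<bar>u y\<bar> powr p) * indicator (ball z' \<delta> \<inter> \<Omega>) y \<partial>M) \<le> ennreal C' * Fn u \<psi>"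
      using bz' adm unfolding Bound_def by blast
    have EF: "En u \<psi> \<le> Fn u \<psi>" unfolding Fn_def by simp
    have "ennreal (2 powr p) * (ennreal V * En u \<psi> + ennreal V * (\<integral>\<^sup>+ y. ennreal (\<bar>u y\<bar> powr p) * indicator (ball z' \<delta> \<inter> \<Omega>) y \<partial>M))
        \<le> ennreal (2 powr p) * (ennreal V * Fn u \<psi> + ennreal V * (ennreal C' * Fn u \<psi>))"
      using EF KB2 by (intro mult_left_mono add_mono) auto
    hence "ennreal b * (\<integral>\<^sup>+ x. ennreal (\<bar>u x\<bar> powr p) * indicator (ball z \<delta> \<inter> \<Omega>) x \<partial>M)
       \<le> ennreal (2 powr p) * (ennreal V * Fn u \<psi> + ennreal V * (ennreal C' * Fn u \<psi>))"
      using P1 unfolding KB by (rule order_trans[rotated])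
    also have "\<dots> = ennreal (2 powr p) * (ennreal V + ennreal V * ennreal C') * Fn u \<psi>"
      by (simp add: distrib_left distrib_right mult.assoc)
    also have "ennreal V + ennreal V * ennreal C' = ennreal (V + V * C')"
      using Vpos C'0 by (simp add: ennreal_mult)
    also have "ennreal (2 powr p) * ennreal (V + V * C') = ennreal (2 powr p * V * (1 + C'))"
      using Vpos C'0 by (simp add: ennreal_mult[symmetric] algebra_simps)
    finally show "(\<integral>\<^sup>+ x. ennreal (\<bar>u x\<bar> powr p) * indicator (ball z \<delta> \<inter> \<Omega>) x \<partial>M) \<le> ennreal C * Fn u \<psi>"
      unfolding C_def using bpos Vpos C'0 by (intro ennreal_div_bound) auto
  qed
  thus ?thesis by blast
qed

end

inductive reach :: "('a \<Rightarrow> bool) \<Rightarrow> 'a set \<Rightarrow> ('a \<Rightarrow> 'a \<Rightarrow> bool) \<Rightarrow> 'a \<Rightarrow> bool"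
  for g I adj where
  rbase: "z \<in> I \<Longrightarrow> g z \<Longrightarrow> reach g I adj z"
| rstep: "reach g I adj z' \<Longrightarrow> z' \<in> I \<Longrightarrow> z \<in> I \<Longrightarrow> adj z z' \<Longrightarrow> reach g I adj z"

context PSp begin

lemma all_reach:
  fixes x0 :: 'a
  assumes Om_sub: "\<Omega> \<subseteq> ball x0 R" and Zfin: "finite Zs"
    and Zcov: "\<forall>y\<in>ball x0 (R + \<epsilon>). \<exists>z\<in>Zs. dist z y < \<delta>"
  defines "I \<equiv> {z\<in>Zs. 0 < emeasure M (ball z \<delta> \<inter> \<Omega>)}"
    and "good \<equiv> \<lambda>z. 0 < emeasure M (S \<inter> ball z (\<epsilon> - \<delta>))"
    and "adj \<equiv> \<lambda>z z'. dist z z' < \<epsilon> - 2 * \<delta>"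
  shows "\<forall>z\<in>I. reach good I adj z"
proof (rule ccontr)
  assume "\<not> (\<forall>z\<in>I. reach good I adj z)"
  then obtain z0 where z0: "z0 \<in> I" "\<not> reach good I adj z0" by blast
  define K where "K = {z\<in>I. \<not> reach good I adj z}"
  define W where "W = (\<Union>z\<in>K. ball z \<delta>)"
  have dpos: "\<delta> > 0" by (rule delta_pos)
  have ed: "\<epsilon> = 8 * \<delta>" unfolding \<delta>_def by simp
  have Kfin: "finite K" unfolding K_def I_def using Zfin by simp
  have nullc: "emeasure M (ball z (\<epsilon> - \<delta>) - \<Omega>) = 0" if zK: "z \<in> K" for z
  proof -
    have zI: "z \<in> I" and nr: "\<not> reach good I adj z" using zK unfolding K_def by auto
    have ng: "\<not> good z" using rbase[of z I good adj] zI nr by blast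
    have "ball z (\<epsilon> - \<delta>) - \<Omega> \<subseteq> S \<inter> ball z (\<epsilon> - \<delta>)"
    proof
      fix y assume y: "y \<in> ball z (\<epsilon> - \<delta>) - \<Omega>"
      have "ball z \<delta> \<inter> \<Omega> \<subseteq> \<Omega> \<inter> ball y \<epsilon>"
      proof
        fix w assume w: "w \<in> ball z \<delta> \<inter> \<Omega>"
        have "dist y w \<le> dist z y + dist z w" by (metis dist_commute dist_triangle)
        thus "w \<in> \<Omega> \<inter> ball y \<epsilon>" using w y by auto
      qed
      hence "emeasure M (ball z \<delta> \<inter> \<Omega>) \<le> emeasure M (\<Omega> \<inter> ball y \<epsilon>)"
        by (intro emeasure_mono) auto
      moreover have "0 < emeasure M (ball z \<delta> \<inter> \<Omega>)" using zI unfolding I_def by simp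
      ultimately have "y \<in> G" unfolding G_def by simp
      thus "y \<in> S \<inter> ball z (\<epsilon> - \<delta>)" using y unfolding S_eq by auto
    qed
    hence "emeasure M (ball z (\<epsilon> - \<delta>) - \<Omega>) \<le> emeasure M (S \<inter> ball z (\<epsilon> - \<delta>))"
      by (intro emeasure_mono) auto
    thus ?thesis using ng unfolding good_def by simp
  qed
  have bigball: "ball z (\<epsilon> - 3 * \<delta>) \<subseteq> W" if zK: "z \<in> K" for z
  proof
    fix y assume y: "y \<in> ball z (\<epsilon> - 3 * \<delta>)"
    have zI: "z \<in> I" and nr: "\<not> reach good I adj z" using zK unfolding K_def by auto
    hence "0 < emeasure M (ball z \<delta> \<inter> \<Omega>)" unfolding I_def by simp
    hence "ball z \<delta> \<inter> \<Omega> \<noteq> {}" by auto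
    then obtain w where w: "w \<in> ball z \<delta>" "w \<in> \<Omega>" by blast
    have "dist x0 w < R" using w Om_sub by auto
    moreover have "dist x0 y \<le> dist x0 w + dist z w + dist z y" by (smt (verit) dist_commute dist_triangle)
    moreover have "dist z w < \<delta>" "dist z y < \<epsilon> - 3 * \<delta>" using w y by auto
    ultimately have "dist x0 y < R + \<epsilon>" using dpos by linarith
    hence "y \<in> ball x0 (R + \<epsilon>)" by simp
    then obtain z' where z': "z' \<in> Zs" "dist z' y < \<delta>" using Zcov by blast
    have "dist z z' \<le> dist z y + dist z' y" by (metis dist_commute dist_triangle)
    hence azz: "adj z z'" unfolding adj_def using y z' by simp
    have bsub: "ball z' \<delta> \<subseteq> ball z (\<epsilon> - \<delta>)"
    proof
      fix v assume "v \<in> ball z' \<delta>"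
      moreover have "dist z v \<le> dist z z' + dist z' v" by (rule dist_triangle)
      ultimately show "v \<in> ball z (\<epsilon> - \<delta>)" using \<open>dist z z' \<le> dist z y + dist z' y\<close> y z' by simp
    qed
    have "emeasure M (ball z' \<delta> - \<Omega>) \<le> emeasure M (ball z (\<epsilon> - \<delta>) - \<Omega>)"
      using bsub by (intro emeasure_mono) auto
    hence n0: "emeasure M (ball z' \<delta> - \<Omega>) = 0" using nullc[OF zK] by simp
    have "emeasure M (ball z' \<delta> \<inter> \<Omega>) + emeasure M (ball z' \<delta> - \<Omega>)
        = emeasure M ((ball z' \<delta> \<inter> \<Omega>) \<union> (ball z' \<delta> - \<Omega>))"
      by (rule plus_emeasure) auto
    also have "(ball z' \<delta> \<inter> \<Omega>) \<union> (ball z' \<delta> - \<Omega>) = ball z' \<delta>" by auto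
    finally have "emeasure M (ball z' \<delta>) = emeasure M (ball z' \<delta> \<inter> \<Omega>) + emeasure M (ball z' \<delta> - \<Omega>)" by simp
    hence "0 < emeasure M (ball z' \<delta> \<inter> \<Omega>)" using n0 ballM_pos[OF dpos, of z'] by simp
    hence z'I: "z' \<in> I" unfolding I_def using z' by simp
    have "\<not> reach good I adj z'" using rstep[of good I adj z' z] z'I zI azz nr by blast
    hence "z' \<in> K" unfolding K_def using z'I by simp
    thus "y \<in> W" unfolding W_def using z' by (auto simp: dist_commute)
  qed
  have Wc: "W = (\<Union>z\<in>K. cball z \<delta>)"
  proof
    show "W \<subseteq> (\<Union>z\<in>K. cball z \<delta>)" unfolding W_def by auto
    have "cball z \<delta> \<subseteq> W" if "z \<in> K" for z
      using bigball[OF that] ed dpos by (smt (verit) mem_ball mem_cball subset_eq)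
    thus "(\<Union>z\<in>K. cball z \<delta>) \<subseteq> W" by blast
  qed
  have oW: "open W" unfolding W_def by auto
  have cW: "closed W" unfolding Wc using Kfin by (intro closed_UN) auto
  have z0K: "z0 \<in> K" unfolding K_def using z0 by simp
  have "z0 \<in> ball z0 \<delta>" using dpos by simp
  hence "z0 \<in> W" unfolding W_def using z0K by blast
  have WU: "W = UNIV"
  proof (rule ccontr)
    assume "W \<noteq> UNIV"
    then obtain q where q: "q \<notin> W" by blast
    have ocW: "open (- W)" using cW by (simp add: open_Compl)
    have "\<exists>(A::'a set) B. open A \<and> open B \<and> UNIV \<subseteq> A \<union> B \<and> A \<inter> B \<inter> UNIV = {} \<and> A \<inter> UNIV \<noteq> {} \<and> B \<inter> UNIV \<noteq> {}"
      by (rule exI[of _ W], rule exI[of _ "- W"]) (use oW ocW q \<open>z0 \<in> W\<close> in blast)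
    thus False using conn unfolding connected_def by blast
  qed
  have "UNIV - \<Omega> \<subseteq> (\<Union>z\<in>K. ball z (\<epsilon> - \<delta>) - \<Omega>)"
  proof
    fix y assume "y \<in> UNIV - \<Omega>"
    then obtain z where "z \<in> K" "y \<in> ball z \<delta>" "y \<notin> \<Omega>" using WU unfolding W_def by blast
    moreover have "ball z \<delta> \<subseteq> ball z (\<epsilon> - \<delta>)" using ed dpos by (intro subset_ball) simp
    ultimately show "y \<in> (\<Union>z\<in>K. ball z (\<epsilon> - \<delta>) - \<Omega>)" by blast
  qed
  moreover have "(\<Union>z\<in>K. ball z (\<epsilon> - \<delta>) - \<Omega>) \<in> sets M"
    using Kfin by (intro sets.finite_UN) auto
  ultimately have "measure M (UNIV - \<Omega>) \<le> measure M (\<Union>z\<in>K. ball z (\<epsilon> - \<delta>) - \<Omega>)"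
    by (intro fm.finite_measure_mono)
  also have "\<dots> \<le> (\<Sum>z\<in>K. measure M (ball z (\<epsilon> - \<delta>) - \<Omega>))"
    using Kfin by (intro fm.finite_measure_subadditive_finite) auto
  also have "\<dots> = 0" using nullc by (simp add: measure_def)
  finally have m0: "measure M (UNIV - \<Omega>) = 0" using measure_nonneg[of M "UNIV - \<Omega>"] by linarith
  have cm: "UNIV - \<Omega> \<in> sets M" using sets.compl_sets[OF OmM] by simp
  have "V = measure M \<Omega> + measure M (UNIV - \<Omega>)"
    unfolding V_def by (subst fm.finite_measure_Union[symmetric]) (use cm OmM in \<open>auto simp: Un_absorb1\<close>)
  hence "V = measure M \<Omega>" using m0 by simp
  moreover have "emeasure M \<Omega> < emeasure M UNIV"
    using Omlt em_borel[of UNIV] by simp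
  ultimately show False using V_eq emM[of \<Omega>] by simp
qed

end

context PSp begin

lemma reach_bound:
  "reach (\<lambda>z. 0 < emeasure M (S \<inter> ball z (\<epsilon> - \<delta>))) I (\<lambda>z z'. dist z z' < \<epsilon> - 2 * \<delta>) z
   \<Longrightarrow> I \<subseteq> {z. 0 < emeasure M (ball z \<delta> \<inter> \<Omega>)} \<Longrightarrow> \<exists>C. Bound z C"
proof (induction rule: reach.induct)
  case (rbase z) thus ?case using base_bound by blast
next
  case (rstep z' z)
  then obtain C' where "Bound z' C'" by blast
  moreover have "0 < emeasure M (ball z' \<delta> \<inter> \<Omega>)" using rstep by auto
  ultimately show ?case using step_bound rstep by blast
qed

lemma poincare: "poincare_ineq M \<epsilon> p \<Omega>"
proof -
  obtain x0 e where xe: "\<forall>y\<in>\<Omega>. dist x0 y \<le> e" using bnd unfolding bounded_def by blast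
  define R where "R = \<bar>e\<bar> + 1"
  have R: "R > 0" unfolding R_def by simp
  have Om_sub: "\<Omega> \<subseteq> ball x0 R" using xe unfolding R_def by force
  have dpos: "\<delta> > 0" by (rule delta_pos)
  obtain Zs where Zfin: "finite Zs" and Zcov0: "\<forall>y\<in>ball x0 (R + \<epsilon>). \<exists>z\<in>Zs. dist z y < 2 * (\<delta> / 2)"
    using net[of "\<delta>/2" "R + \<epsilon>" x0] dpos R eps by auto
  have Zcov: "\<forall>y\<in>ball x0 (R + \<epsilon>). \<exists>z\<in>Zs. dist z y < \<delta>" using Zcov0 by simp
  define I where "I = {z\<in>Zs. 0 < emeasure M (ball z \<delta> \<inter> \<Omega>)}"
  have allr: "\<forall>z\<in>I. reach (\<lambda>z. 0 < emeasure M (S \<inter> ball z (\<epsilon> - \<delta>))) I (\<lambda>z z'. dist z z' < \<epsilon> - 2 * \<delta>) z"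
    unfolding I_def by (rule all_reach[OF Om_sub Zfin Zcov])
  have "\<forall>z\<in>I. \<exists>C. Bound z C"
    using reach_bound allr unfolding I_def by blast
  then obtain Cf where Cf: "\<forall>z\<in>I. Bound z (Cf z)" by metis
  define Cf' where "Cf' z = (if z \<in> I then Cf z else 0)" for z
  have Cf'0: "Cf' z \<ge> 0" for z unfolding Cf'_def using Cf Bound_def by auto
  define K0 where "K0 = (\<Sum>z\<in>Zs. Cf' z)"
  have K0: "K0 \<ge> 0" unfolding K0_def using Cf'0 by (simp add: sum_nonneg)
  define lam where "lam = 1 / (K0 + 1)"
  have lam: "lam > 0" unfolding lam_def using K0 by simp
  have lamK: "lam * K0 \<le> 1" unfolding lam_def using K0 by (simp add: field_simps)
  have main: "(\<integral>\<^sup>+ x. ennreal (\<bar>u x\<bar> powr p) * indicator \<Omega> x \<partial>M) \<le> ennreal K0 * Fn u \<psi>"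
    if adm: "Adm u \<psi>" for u \<psi>
  proof -
    let ?U = "\<lambda>x. indicator \<Omega> x *\<^sub>R u x"
    have U[measurable]: "?U \<in> borel_measurable M"
      using adm unfolding Adm_def Lq_on_def set_borel_measurable_def by auto
    have conv: "(\<integral>\<^sup>+ x. ennreal (\<bar>u x\<bar> powr p) * indicator A x \<partial>M) = (\<integral>\<^sup>+ x. ennreal (\<bar>?U x\<bar> powr p) * indicator A x \<partial>M)"
      if "A \<subseteq> \<Omega>" for A
      by (rule nn_integral_cong) (use that in \<open>auto simp: indicator_def\<close>)
    have "(\<integral>\<^sup>+ x. ennreal (\<bar>u x\<bar> powr p) * indicator \<Omega> x \<partial>M)
        \<le> (\<integral>\<^sup>+ x. (\<Sum>z\<in>Zs. ennreal (\<bar>?U x\<bar> powr p) * indicator (ball z \<delta> \<inter> \<Omega>) x) \<partial>M)"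
      unfolding conv[OF order_refl]
    proof (rule nn_integral_mono)
      fix x
      show "ennreal (\<bar>?U x\<bar> powr p) * indicator \<Omega> x \<le> (\<Sum>z\<in>Zs. ennreal (\<bar>?U x\<bar> powr p) * indicator (ball z \<delta> \<inter> \<Omega>) x)"
      proof (cases "x \<in> \<Omega>")
        case True
        hence "x \<in> ball x0 (R + \<epsilon>)" using Om_sub eps by auto
        then obtain z where z: "z \<in> Zs" "dist z x < \<delta>" using Zcov by blast
        have "ennreal (\<bar>?U x\<bar> powr p) * indicator \<Omega> x = ennreal (\<bar>?U x\<bar> powr p) * indicator (ball z \<delta> \<inter> \<Omega>) x"
          using True z by (simp add: indicator_def)
        also have "\<dots> \<le> (\<Sum>z\<in>Zs. ennreal (\<bar>?U x\<bar> powr p) * indicator (ball z \<delta> \<inter> \<Omega>) x)"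
          by (rule member_le_sum) (use z Zfin in auto)
        finally show ?thesis .
      qed simp
    qed
    also have "\<dots> = (\<Sum>z\<in>Zs. (\<integral>\<^sup>+ x. ennreal (\<bar>?U x\<bar> powr p) * indicator (ball z \<delta> \<inter> \<Omega>) x \<partial>M))"
      by (rule nn_integral_sum) measurable
    also have "\<dots> \<le> (\<Sum>z\<in>Zs. ennreal (Cf' z) * Fn u \<psi>)"
    proof (rule sum_mono)
      fix z assume "z \<in> Zs"
      show "(\<integral>\<^sup>+ x. ennreal (\<bar>?U x\<bar> powr p) * indicator (ball z \<delta> \<inter> \<Omega>) x \<partial>M) \<le> ennreal (Cf' z) * Fn u \<psi>"
      proof (cases "z \<in> I")
        case True
        have "(\<integral>\<^sup>+ x. ennreal (\<bar>?U x\<bar> powr p) * indicator (ball z \<delta> \<inter> \<Omega>) x \<partial>M)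
            = (\<integral>\<^sup>+ x. ennreal (\<bar>u x\<bar> powr p) * indicator (ball z \<delta> \<inter> \<Omega>) x \<partial>M)"
          using conv[of "ball z \<delta> \<inter> \<Omega>"] by simp
        also have "\<dots> \<le> ennreal (Cf z) * Fn u \<psi>" using Cf adm True unfolding Bound_def by blast
        finally show ?thesis unfolding Cf'_def using True by simp
      next
        case False
        hence "emeasure M (ball z \<delta> \<inter> \<Omega>) = 0" unfolding I_def using \<open>z \<in> Zs\<close> by (simp add: zero_less_iff_neq_zero)
        hence "ball z \<delta> \<inter> \<Omega> \<in> null_sets M" by (auto simp: null_sets_def)
        hence "(\<integral>\<^sup>+ x. ennreal (\<bar>?U x\<bar> powr p) * indicator (ball z \<delta> \<inter> \<Omega>) x \<partial>M) = 0"
          by (rule nn_integral_null_set)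
        thus ?thesis by simp
      qed
    qed
    also have "\<dots> = ennreal K0 * Fn u \<psi>"
      unfolding K0_def using Cf'0 by (simp add: sum_distrib_right[symmetric])
    finally show ?thesis .
  qed
  show ?thesis unfolding poincare_ineq_def
  proof (intro exI[of _ lam] conjI allI impI)
    show "lam > 0" by (rule lam)
    fix u \<psi> assume "Lq_on M p \<Omega> u" "Lq_on M p S \<psi>"
    hence adm: "Adm u \<psi>" unfolding Adm_def by simp
    have "ennreal lam * (\<integral>\<^sup>+ x. ennreal (\<bar>u x\<bar> powr p) * indicator \<Omega> x \<partial>M) \<le> ennreal lam * (ennreal K0 * Fn u \<psi>)"
      by (rule mult_left_mono[OF main[OF adm]]) simp
    also have "\<dots> = ennreal (lam * K0) * Fn u \<psi>" using lam K0 by (simp add: ennreal_mult mult.assoc)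
    also have "\<dots> \<le> ennreal 1 * Fn u \<psi>" using lamK by (intro mult_right_mono) auto
    finally show "ennreal lam * (\<integral>\<^sup>+ x. ennreal (\<bar>u x\<bar> powr p) * indicator \<Omega> x \<partial>M)
      \<le> (\<integral>\<^sup>+ x. (\<integral>\<^sup>+ y. ennreal (\<bar>(if y \<in> \<Omega> then u y else \<psi> y) - u x\<bar> powr p)
              * indicator (m_closure M \<epsilon> \<Omega>) y \<partial>rw M \<epsilon> x) * indicator \<Omega> x \<partial>M)
        + (\<integral>\<^sup>+ y. ennreal (\<bar>\<psi> y\<bar> powr p) * indicator S y \<partial>M)"
      unfolding Fn_def En_def Sp_def by simp
  qed
qed

end

theorem mainTheorem10:
  fixes \<nu> :: "'a::polish_space measure" and \<epsilon> :: real and \<Omega> :: "'a set"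
  assumes "length_space TYPE('a)"
    and "sets \<nu> = sets borel"
    and "doubling \<nu>"
    and "emeasure \<nu> (space \<nu>) < \<infinity>"
    and "\<epsilon> > 0"
    and "ergodic_rw (completion \<nu>) \<epsilon>"
    and "\<Omega> \<in> sets (completion \<nu>)"
    and "bounded \<Omega>"
    and "0 < emeasure (completion \<nu>) \<Omega>"
    and "emeasure (completion \<nu>) \<Omega> < emeasure \<nu> (space \<nu>)"
  shows "\<forall>p\<ge>1. poincare_ineq (completion \<nu>) \<epsilon> p \<Omega>"
proof (intro allI impI)
  fix p :: real assume p: "p \<ge> 1"
  interpret PSp \<nu> \<epsilon> \<Omega> p
    by unfold_locales (use assms p length_space_connected[OF assms(1)] in auto)
  show "poincare_ineq (completion \<nu>) \<epsilon> p \<Omega>" by (rule poincare)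
qed

end
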